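(* Let $\mathcal F=(F,\rightarrowtail)$ be a finite argumentation framework. If $A\subseteq F$ is statically tenable, then $A$ is contained in some weakly complete extension of $\mathcal F$.
   Context: An argumentation framework $\mathcal F=(F,\rightarrowtail)$ consists of a set $F$ of arguments and an attack relation $\rightarrowtail\subseteq F\times F$. An argument $a$ attacks a set $B$ if $a\rightarrowtail b$ for some $b\in B$. $A^+=\{x\in F:\exists a\in A,\ a\rightarrowtail x\}$. A set is conflict-free if none of its elements attacks one of its elements. $A\succeq B$ ($A$ is as cogent as $B$) means $A$ is conflict-free and every $b\in B$ that attacks $A$ belongs to $A^+$. $A\subseteq F$ is statically tenable if for every finite conflict-free $B\subseteq F$ there is a conflict-free $C\supseteq A$ with $C\succeq B$. A weakly complete labeling is a map $L:F\to\{\mathtt{in},\mathtt{out},\mathtt{undec}\}$ such that for every $a\in F$: if $L(a)=\mathtt{in}$ then no attacker of $a$ is labeled $\mathtt{in}$; if $L(a)=\mathtt{out}$ then some attacker of $a$ is labeled $\mathtt{in}$; if $L(a)=\mathtt{undec}$ then some attacker of $a$ is labeled $\mathtt{undec}$ and no attacker of $a$ is labeled $\mathtt{in}$. A set is a weakly complete extension if it equals $\{a:L(a)=\mathtt{in}\}$ for some weakly complete labeling $L$. *)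

theory Defs
  imports Main
begin

definition AF :: "'a set \<Rightarrow> ('a \<Rightarrow> 'a \<Rightarrow> bool) \<Rightarrow> bool" where
  "AF F att \<longleftrightarrow> (\<forall>a b. att a b \<longrightarrow> a \<in> F \<and> b \<in> F)"

definition attacks_set :: "('a \<Rightarrow> 'a \<Rightarrow> bool) \<Rightarrow> 'a \<Rightarrow> 'a set \<Rightarrow> bool" where
  "attacks_set att a B \<longleftrightarrow> (\<exists>b\<in>B. att a b)"

definition plus :: "'a set \<Rightarrow> ('a \<Rightarrow> 'a \<Rightarrow> bool) \<Rightarrow> 'a set \<Rightarrow> 'a set" where
  "plus F att A = {x \<in> F. \<exists>a\<in>A. att a x}"

definition conflict_free :: "('a \<Rightarrow> 'a \<Rightarrow> bool) \<Rightarrow> 'a set \<Rightarrow> bool" where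
  "conflict_free att A \<longleftrightarrow> (\<forall>a\<in>A. \<not> attacks_set att a A)"

definition cogent :: "'a set \<Rightarrow> ('a \<Rightarrow> 'a \<Rightarrow> bool) \<Rightarrow> 'a set \<Rightarrow> 'a set \<Rightarrow> bool" where
  "cogent F att A B \<longleftrightarrow> conflict_free att A \<and>
     (\<forall>b\<in>B. attacks_set att b A \<longrightarrow> b \<in> plus F att A)"

definition statically_tenable :: "'a set \<Rightarrow> ('a \<Rightarrow> 'a \<Rightarrow> bool) \<Rightarrow> 'a set \<Rightarrow> bool" where
  "statically_tenable F att A \<longleftrightarrow> A \<subseteq> F \<and>
     (\<forall>B. B \<subseteq> F \<and> finite B \<and> conflict_free att B \<longrightarrow>
        (\<exists>C. A \<subseteq> C \<and> C \<subseteq> F \<and> conflict_free att C \<and> cogent F att C B))"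

datatype label = In | Out | Undec

definition weakly_complete_labeling ::
  "'a set \<Rightarrow> ('a \<Rightarrow> 'a \<Rightarrow> bool) \<Rightarrow> ('a \<Rightarrow> label) \<Rightarrow> bool" where
  "weakly_complete_labeling F att L \<longleftrightarrow> (\<forall>a\<in>F.
     (L a = In \<longrightarrow> \<not> (\<exists>b\<in>F. att b a \<and> L b = In)) \<and>
     (L a = Out \<longrightarrow> (\<exists>b\<in>F. att b a \<and> L b = In)) \<and>
     (L a = Undec \<longrightarrow> (\<exists>b\<in>F. att b a \<and> L b = Undec) \<and> \<not> (\<exists>b\<in>F. att b a \<and> L b = In)))"

definition weakly_complete_extension :: "'a set \<Rightarrow> ('a \<Rightarrow> 'a \<Rightarrow> bool) \<Rightarrow> 'a set \<Rightarrow> bool" where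
  "weakly_complete_extension F att E \<longleftrightarrow>
     (\<exists>L. weakly_complete_labeling F att L \<and> E = {a \<in> F. L a = In})"

end

theory Submission
  imports Defs
begin

lemma st_cf:
  assumes "statically_tenable F att E"
  shows "conflict_free att E"
proof -
  have "{} \<subseteq> F \<and> finite {} \<and> conflict_free att {}"
    unfolding conflict_free_def by simp
  then obtain C where "E \<subseteq> C" "conflict_free att C"
    using assms unfolding statically_tenable_def by blast
  then show ?thesis unfolding conflict_free_def attacks_set_def by blast
qed
lemma add_bad:
  assumes af: "AF F att" and st: "statically_tenable F att E"
    and aF: "a \<in> F" and na: "a \<notin> plus F att E"
    and def: "\<forall>b\<in>F. att b a \<longrightarrow> b \<in> plus F att E"
  shows "statically_tenable F att (insert a E)"
proof -
  have EF: "E \<subseteq> F" using st unfolding statically_tenable_def by blast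
  have naa: "\<not> att a a" using def aF na by blast
  show ?thesis unfolding statically_tenable_def
  proof (intro conjI allI impI)
    show "insert a E \<subseteq> F" using EF aF by blast
  next
    fix B assume B: "B \<subseteq> F \<and> finite B \<and> conflict_free att B"
    define B' where "B' = insert a {b \<in> B. \<not> att a b \<and> \<not> att b a}"
    have "B' \<subseteq> F \<and> finite B' \<and> conflict_free att B'"
      using B aF naa unfolding B'_def conflict_free_def attacks_set_def by auto
    then obtain C where C: "E \<subseteq> C" "C \<subseteq> F" "conflict_free att C" "cogent F att C B'"
      using st unfolding statically_tenable_def by blast
    have noatt: "\<And>c. c \<in> C \<Longrightarrow> \<not> att c a"
    proof
      fix c assume c: "c \<in> C" "att c a"
      then have "c \<in> F" using af unfolding AF_def by blast
      then have "c \<in> plus F att E" using def c by blast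
      then obtain e where "e \<in> E" "att e c" unfolding plus_def by blast
      then show False using C(1,3) c unfolding conflict_free_def attacks_set_def by blast
    qed
    have anC: "\<not> attacks_set att a C"
    proof
      assume h: "attacks_set att a C"
      have "a \<in> B'" unfolding B'_def by simp
      then have "a \<in> plus F att C" using C(4) h unfolding cogent_def by blast
      then show False using noatt unfolding plus_def by blast
    qed
    have cf: "conflict_free att (insert a C)"
      using C(3) anC noatt naa unfolding conflict_free_def attacks_set_def by blast
    have cog: "cogent F att (insert a C) B"
      unfolding cogent_def
    proof (intro conjI ballI impI)
      show "conflict_free att (insert a C)" by (rule cf)
    next
      fix b assume b: "b \<in> B" "attacks_set att b (insert a C)"
      have bF: "b \<in> F" using b B by blast
      show "b \<in> plus F att (insert a C)"
      proof (cases "att b a")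
        case True
        then have "b \<in> plus F att E" using def bF by blast
        then show ?thesis using C(1) unfolding plus_def by blast
      next
        case nba: False
        show ?thesis
        proof (cases "att a b")
          case True
          then show ?thesis using bF unfolding plus_def by blast
        next
          case False
          then have "b \<in> B'" using nba b unfolding B'_def by blast
          moreover have "attacks_set att b C" using b nba unfolding attacks_set_def by blast
          ultimately have "b \<in> plus F att C" using C(4) unfolding cogent_def by blast
          then show ?thesis unfolding plus_def by blast
        qed
      qed
    qed
    show "\<exists>C. insert a E \<subseteq> C \<and> C \<subseteq> F \<and> conflict_free att C \<and> cogent F att C B"
      using C(1,2) aF cf cog by (intro exI[of _ "insert a C"]) blast
  qed
qed

theorem mainTheorem14:
  fixes F :: "'a set" and att :: "'a \<Rightarrow> 'a \<Rightarrow> bool" and A :: "'a set"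
  assumes "AF F att" and "finite F"
    and "statically_tenable F att A"
  shows "\<exists>E. weakly_complete_extension F att E \<and> A \<subseteq> E"
proof -
  let ?S = "{E. E \<subseteq> F \<and> A \<subseteq> E \<and> statically_tenable F att E}"
  have AF': "A \<subseteq> F" using assms(3) unfolding statically_tenable_def by blast
  have "?S \<subseteq> Pow F" by blast
  then have fin: "finite ?S" using assms(2) by (simp add: finite_subset)
  have ne: "?S \<noteq> {}" using AF' assms(3) by blast
  obtain E where E: "E \<in> ?S" and max: "\<forall>X\<in>?S. E \<subseteq> X \<longrightarrow> E = X"
    using finite_has_maximal[OF fin ne] by blast
  have EF: "E \<subseteq> F" and AE: "A \<subseteq> E" and st: "statically_tenable F att E" using E by auto
  have cf: "conflict_free att E" using st by (rule st_cf)
  define L where "L a = (if a \<in> E then In else if a \<in> plus F att E then Out else Undec)" for a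
  have "weakly_complete_labeling F att L"
    unfolding weakly_complete_labeling_def
  proof (intro ballI conjI impI)
    fix a assume aF: "a \<in> F"
    { assume "L a = In"
      then have "a \<in> E" unfolding L_def by (auto split: if_splits)
      then show "\<not> (\<exists>b\<in>F. att b a \<and> L b = In)"
        using cf unfolding L_def conflict_free_def attacks_set_def by (auto split: if_splits) }
    { assume "L a = Out"
      then have "a \<in> plus F att E" unfolding L_def by (auto split: if_splits)
      then obtain b where "b \<in> E" "att b a" unfolding plus_def by blast
      then show "\<exists>b\<in>F. att b a \<and> L b = In" using EF by (intro bexI[of _ b]) (auto simp: L_def) }
    { assume U: "L a = Undec"
      then have naE: "a \<notin> E" and nap: "a \<notin> plus F att E" unfolding L_def by (auto split: if_splits)
      show "\<not> (\<exists>b\<in>F. att b a \<and> L b = In)"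
        using nap aF unfolding L_def plus_def by (auto split: if_splits)
      show "\<exists>b\<in>F. att b a \<and> L b = Undec"
      proof (rule ccontr)
        assume "\<not> (\<exists>b\<in>F. att b a \<and> L b = Undec)"
        then have def: "\<forall>b\<in>F. att b a \<longrightarrow> b \<in> plus F att E"
          using nap aF unfolding L_def plus_def by (auto split: if_splits)
        have "statically_tenable F att (insert a E)"
          by (rule add_bad[OF assms(1) st aF nap def])
        then have "insert a E \<in> ?S" using EF AE aF by blast
        then have "E = insert a E" using max by blast
        then show False using naE by blast
      qed }
  qed
  then have "weakly_complete_extension F att E"
    unfolding weakly_complete_extension_def using EF
    by (intro exI[of _ L]) (auto simp: L_def)
  then show ?thesis using AE by blast
qed

end
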